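(* Let $T$ be a tree on $n\ge3$ vertices, let $M$ be its order-$4$ Steiner distance hypermatrix, and let $A=\frac{2}{n}J_n-I_n$. Define the order-$4$ multilinear forms $C_1(\mathbf{x}_1,\mathbf{x}_2,\mathbf{x}_3,\mathbf{x}_4)=M(\mathbf{x}_1,\mathbf{x}_2,\mathbf{x}_3,A\mathbf{x}_4)$ and $C_3(\mathbf{x}_1,\mathbf{x}_2,\mathbf{x}_3,\mathbf{x}_4)=M(\mathbf{x}_1,A\mathbf{x}_2,A\mathbf{x}_3,A\mathbf{x}_4)$. Then $C_1+C_3$ is positive definite: $(C_1+C_3)(\mathbf{v},\mathbf{v},\mathbf{v},\mathbf{v})>0$ for every nonzero $\mathbf{v}\in\mathbb{R}^n$.
   Context: $T$ is a tree with vertex set $\{1,\dots,n\}$. For $U\subseteq V(T)$, the Steiner distance $S(U)$ is the minimum number of edges of a connected subgraph of $T$ whose vertex set contains $U$. The order-$4$ Steiner distance hypermatrix $M$ has entries $M_{(i_1,\dots,i_4)}=S(\{i_1,\dots,i_4\})$, and $M(\mathbf{x}_1,\dots,\mathbf{x}_4)=\sum_{\mathbf{i}\in V(T)^4}M_{\mathbf{i}}\prod_{j=1}^4 x_{j i_j}$. $J_n$ is the $n\times n$ all-ones matrix and $I_n$ the identity matrix. *)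

theory Defs
  imports "HOL-Analysis.Analysis"
begin

text \<open>Simple graphs on a vertex set given by an edge set E of 2-element vertex sets.\<close>

definition adj_rel :: "'a set set \<Rightarrow> ('a \<times> 'a) set" where
  "adj_rel F = {(a, b). {a, b} \<in> F}"

definition connected_on :: "'a set \<Rightarrow> 'a set set \<Rightarrow> bool" where
  "connected_on W F \<longleftrightarrow> (\<forall>a\<in>W. \<forall>b\<in>W. (a, b) \<in> (adj_rel F)\<^sup>*)"

definition has_cycle :: "'a set set \<Rightarrow> bool" where
  "has_cycle E \<longleftrightarrow> (\<exists>cs. length cs \<ge> 3 \<and> distinct cs \<and>
      (\<forall>i < length cs - 1. {cs ! i, cs ! Suc i} \<in> E) \<and> {last cs, hd cs} \<in> E)"

definition is_tree :: "'a set \<Rightarrow> 'a set set \<Rightarrow> bool" where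
  "is_tree V E \<longleftrightarrow> (\<forall>e\<in>E. card e = 2 \<and> e \<subseteq> V) \<and> connected_on V E \<and> \<not> has_cycle E"

definition steiner_dist :: "'a set \<Rightarrow> 'a set set \<Rightarrow> 'a set \<Rightarrow> nat" where
  "steiner_dist V E U = (LEAST k. \<exists>W F. U \<subseteq> W \<and> W \<subseteq> V \<and> F \<subseteq> E \<and> (\<forall>e\<in>F. e \<subseteq> W)
        \<and> connected_on W F \<and> card F = k)"

definition steiner_form4 :: "('n::finite) set set \<Rightarrow> real^'n \<Rightarrow> real^'n \<Rightarrow> real^'n \<Rightarrow> real^'n \<Rightarrow> real" where
  "steiner_form4 E x1 x2 x3 x4 =
     (\<Sum>i1\<in>UNIV. \<Sum>i2\<in>UNIV. \<Sum>i3\<in>UNIV. \<Sum>i4\<in>UNIV.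
        real (steiner_dist UNIV E {i1, i2, i3, i4}) * x1 $ i1 * x2 $ i2 * x3 $ i3 * x4 $ i4)"

definition A_mat :: "real^'n^'n" where
  "A_mat = (\<chi> i j. 2 / real CARD('n::finite) - (if i = j then 1 else 0))"

end

theory Submission
  imports Defs "HOL-Library.Transitive_Closure_Table"
begin




lemma adj_iff[simp]: "(a,b) \<in> adj_rel F \<longleftrightarrow> {a,b} \<in> F"
  by (simp add: adj_rel_def)

definition side :: "'a set set \<Rightarrow> 'a set \<Rightarrow> 'a \<Rightarrow> 'a set" where
  "side E e x = {z. (x,z) \<in> (adj_rel (E - {e}))\<^sup>*}"

definition bnd :: "'a set set \<Rightarrow> 'a set \<Rightarrow> 'a set \<Rightarrow> 'a \<Rightarrow> 'a \<Rightarrow> bool" where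
  "bnd E e S x y \<longleftrightarrow> e = {x,y} \<and> x \<in> S \<and> y \<notin> S \<and>
     (\<forall>a b. {a,b} \<in> E \<and> {a,b} \<noteq> e \<and> a \<in> S \<longrightarrow> b \<in> S)"

lemma bnd_e: "bnd E e S x y \<Longrightarrow> e = {x,y}" by (simp add: bnd_def)
lemma bnd_x: "bnd E e S x y \<Longrightarrow> x \<in> S" by (simp add: bnd_def)
lemma bnd_y: "bnd E e S x y \<Longrightarrow> y \<notin> S" by (simp add: bnd_def)
lemma bnd_cl: "bnd E e S x y \<Longrightarrow> {a,b} \<in> E \<Longrightarrow> {a,b} \<noteq> e \<Longrightarrow> a \<in> S \<Longrightarrow> b \<in> S"
  unfolding bnd_def by blast

lemma path_props:
  assumes "rtrancl_path r x xs y"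
  shows "(\<forall>i<length xs. r ((x#xs)!i) ((x#xs)! Suc i)) \<and> last (x#xs) = y"
  using assms
proof (induction)
  case (base x) then show ?case by simp
next
  case (step x y ys z)
  show ?case
  proof (intro conjI allI impI)
    fix i assume "i < length (y#ys)"
    then show "r ((x # y # ys) ! i) ((x # y # ys) ! Suc i)"
      using step by (cases i) auto
  next
    show "last (x # y # ys) = z" using step by simp
  qed
qed




lemma acyclic_side:
  assumes nc: "\<not> has_cycle E" and e: "e = {x,y}" "e \<in> E" and xy: "x \<noteq> y"
  shows "y \<notin> side E e x"
proof
  assume "y \<in> side E e x"
  then have "(x,y) \<in> (adj_rel (E - {e}))\<^sup>*" by (simp add: side_def)
  then have "(\<lambda>a b. {a,b} \<in> E - {e})\<^sup>*\<^sup>* x y"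
    by (simp add: rtranclp_rtrancl_eq adj_rel_def)
  then obtain xs0 where "rtrancl_path (\<lambda>a b. {a,b} \<in> E - {e}) x xs0 y"
    by (auto simp: rtranclp_eq_rtrancl_path)
  then obtain xs where p: "rtrancl_path (\<lambda>a b. {a,b} \<in> E - {e}) x xs y"
    and d: "distinct (x#xs)" by (rule rtrancl_path_distinct)
  from path_props[OF p] have pp: "\<forall>i<length xs. {(x#xs)!i, (x#xs)! Suc i} \<in> E - {e}"
    and l: "last (x#xs) = y" by auto
  have ne: "xs \<noteq> []" using l xy by auto
  have ny: "xs \<noteq> [y]"
  proof
    assume "xs = [y]"
    then have "{x,y} \<in> E - {e}" using pp by (auto)
    with e show False by simp
  qed
  have len: "length (x#xs) \<ge> 3"
  proof (cases xs)
    case Nil then show ?thesis using ne by simp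
  next
    case (Cons a as)
    have "as \<noteq> []"
    proof
      assume "as = []"
      then have "xs = [y]" using l Cons by simp
      with ny show False by simp
    qed
    then show ?thesis using Cons by (cases as) auto
  qed
  have c3: "\<forall>i < length (x#xs) - 1. {(x#xs)!i, (x#xs)!Suc i} \<in> E" using pp by auto
  have c4: "{last (x#xs), hd (x#xs)} \<in> E" using l e by (simp add: insert_commute)
  have "has_cycle E" unfolding has_cycle_def using len d c3 c4 by blast
  with nc show False by simp
qed




lemma side_closed:
  assumes "a \<in> side E e x" "{a,b} \<in> E" "{a,b} \<noteq> e"
  shows "b \<in> side E e x"
  using assms by (auto simp: side_def intro: rtrancl_into_rtrancl)

lemma bnd_side:
  assumes "\<not> has_cycle E" "e = {x,y}" "e \<in> E" "x \<noteq> y"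
  shows "bnd E e (side E e x) x y"
  unfolding bnd_def
proof (intro conjI allI impI)
  show "e = {x,y}" by fact
  show "x \<in> side E e x" by (simp add: side_def)
  show "y \<notin> side E e x" using acyclic_side[OF assms] .
  fix a b assume h: "{a, b} \<in> E \<and> {a, b} \<noteq> e \<and> a \<in> side E e x"
  show "b \<in> side E e x" using side_closed[of a E e x b] h by simp
qed

lemma bnd_compl:
  assumes "\<not> has_cycle E" "e = {x,y}" "e \<in> E" "x \<noteq> y"
  shows "bnd E e (- side E e x) y x"
  unfolding bnd_def
proof (intro conjI allI impI)
  show "e = {y,x}" using assms by auto
  show "y \<in> - side E e x" using acyclic_side[OF assms] by simp
  show "x \<notin> - side E e x" by (simp add: side_def)
  fix a b assume h: "{a, b} \<in> E \<and> {a, b} \<noteq> e \<and> a \<in> - side E e x"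
  show "b \<in> - side E e x"
  proof
    assume "b \<in> side E e x"
    then have "a \<in> side E e x" using h side_closed[of b E e x a] by (auto simp: insert_commute)
    with h show False by simp
  qed
qed




lemma bnd_path_stay:
  assumes "bnd E e S x y" "F \<subseteq> E - {e}" "(a,b) \<in> (adj_rel F)\<^sup>*" "a \<in> S"
  shows "b \<in> S"
  using assms(3,4)
proof (induction rule: rtrancl_induct)
  case base then show ?case .
next
  case (step b c)
  then have "{b,c} \<in> E" "{b,c} \<noteq> e" using assms(2) by auto
  then show ?case using bnd_cl[OF assms(1)] step by blast
qed

lemma bnd_cut:
  assumes b: "bnd E e S x y" and FE: "F \<subseteq> E" and p: "(a,b) \<in> (adj_rel F)\<^sup>*" and a: "a \<in> S"
  shows "(b \<in> S \<longrightarrow> (a,b) \<in> (adj_rel {f\<in>F. f \<subseteq> S})\<^sup>*) \<and>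
         (b \<notin> S \<longrightarrow> (a,x) \<in> (adj_rel {f\<in>F. f \<subseteq> S})\<^sup>*)"
  using p
proof (induction rule: rtrancl_induct)
  case base then show ?case using a by simp
next
  case (step b c)
  have bc: "{b,c} \<in> F" using step by simp
  have bcE: "{b,c} \<in> E" using bc FE by blast
  have ex: "e = {x,y}" "x \<in> S" "y \<notin> S" using bnd_e[OF b] bnd_x[OF b] bnd_y[OF b] by auto
  show ?case
  proof (cases "b \<in> S")
    case True
    show ?thesis
    proof (cases "c \<in> S")
      case True
      then have "{b,c} \<in> {f\<in>F. f \<subseteq> S}" using \<open>b \<in> S\<close> bc by simp
      then have "(b,c) \<in> adj_rel {f\<in>F. f \<subseteq> S}" by simp
      then show ?thesis using \<open>b \<in> S\<close> True step.IH by (meson rtrancl_into_rtrancl)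
    next
      case False
      have "{b,c} = e" using bnd_cl[OF b bcE _ \<open>b \<in> S\<close>] False by blast
      then have "b = x" using ex \<open>b \<in> S\<close> False by (simp add: doubleton_eq_iff) blast
      then show ?thesis using step.IH True False by simp
    qed
  next
    case False
    show ?thesis
    proof (cases "c \<in> S")
      case True
      have cbE: "{c,b} \<in> E" using bcE by (simp add: insert_commute)
      have "{c,b} = e" using bnd_cl[OF b cbE _ True] False by blast
      then have "c = x" using ex \<open>b \<notin> S\<close> True by (simp add: doubleton_eq_iff) blast
      then show ?thesis using step.IH True False by simp
    next
      case c: False
      then show ?thesis using step.IH False by simp
    qed
  qed
qed





definition xe :: "'a set \<Rightarrow> 'a" where "xe e = (SOME x. x \<in> e)"
definition Se :: "'a set set \<Rightarrow> 'a set \<Rightarrow> 'a set" where "Se E e = side E e (xe e)"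
definition cross :: "'a set set \<Rightarrow> 'a set \<Rightarrow> 'a set \<Rightarrow> bool" where
  "cross E e U \<longleftrightarrow> U \<inter> Se E e \<noteq> {} \<and> U - Se E e \<noteq> {}"

lemma tree_edge: "is_tree V E \<Longrightarrow> e \<in> E \<Longrightarrow> card e = 2"
  by (simp add: is_tree_def)
lemma tree_conn: "is_tree V E \<Longrightarrow> connected_on V E"
  by (simp add: is_tree_def)
lemma tree_sub: "is_tree V E \<Longrightarrow> e \<in> E \<Longrightarrow> e \<subseteq> V"
  by (simp add: is_tree_def)

lemma edge_xe:
  assumes "is_tree V E" "e \<in> E"
  shows "\<exists>y. e = {xe e, y} \<and> xe e \<noteq> y"
proof -
  have "card e = 2" using tree_edge[OF assms] .
  then obtain a b where ab: "a \<noteq> b" "e = {a,b}" by (auto simp: card_2_iff)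
  have "xe e \<in> e" unfolding xe_def by (rule someI[of _ a]) (simp add: ab)
  then have "xe e = a \<or> xe e = b" using ab by simp
  then show ?thesis
  proof
    assume "xe e = a" then show ?thesis using ab by blast
  next
    assume "xe e = b" then show ?thesis using ab by (metis insert_commute)
  qed
qed

lemma edge_two:
  assumes "is_tree V E" "{a,b} \<in> E"
  shows "a \<noteq> b"
  using tree_edge[OF assms] by (cases "a = b") auto

lemma tree_nc: "is_tree V E \<Longrightarrow> \<not> has_cycle E"
  by (simp add: is_tree_def)

lemma bnd_Se:
  assumes "is_tree V E" "e \<in> E"
  obtains y where "bnd E e (Se E e) (xe e) y" "bnd E e (- Se E e) y (xe e)"
  using edge_xe[OF assms] bnd_side[OF tree_nc[OF assms(1)]] bnd_compl[OF tree_nc[OF assms(1)]] assms(2)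
  unfolding Se_def by blast

lemma finite_any[simp]: "finite (A :: ('n::finite) set set)"
  by simp

lemma cut_witness:
  assumes b: "bnd E e S p q" and eF: "e \<in> F0" and FE: "F0 \<subseteq> E"
    and U: "U \<subseteq> W0" "U \<subseteq> S" and FW: "\<forall>f\<in>F0. f \<subseteq> W0" and c: "connected_on W0 F0"
    and fin: "finite F0"
  shows "\<exists>W F. U \<subseteq> W \<and> F \<subseteq> E \<and> (\<forall>f\<in>F. f \<subseteq> W) \<and> connected_on W F \<and> card F < card F0"
proof (intro exI conjI)
  let ?W = "W0 \<inter> S" and ?F = "{f\<in>F0. f \<subseteq> S}"
  show "U \<subseteq> ?W" using U by auto
  show "?F \<subseteq> E" using FE by auto
  show "\<forall>f\<in>?F. f \<subseteq> ?W" using FW by auto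
  show "connected_on ?W ?F"
    unfolding connected_on_def
  proof (intro ballI)
    fix a b0 assume "a \<in> ?W" "b0 \<in> ?W"
    then have "(a,b0) \<in> (adj_rel F0)\<^sup>*" using c unfolding connected_on_def by auto
    then show "(a,b0) \<in> (adj_rel ?F)\<^sup>*" using bnd_cut[OF b FE _ ] \<open>a \<in> ?W\<close> \<open>b0 \<in> ?W\<close> by blast
  qed
  have "q \<in> e" "q \<notin> S" using b unfolding bnd_def by auto
  then have "e \<notin> ?F" by auto
  then have "?F \<subset> F0" using eF by auto
  then show "card ?F < card F0" using fin by (rule psubset_card_mono[rotated])
qed

lemma steiner_eq:
  fixes E :: "('n::finite) set set"
  assumes t: "is_tree UNIV E"
  shows "steiner_dist UNIV E U = card {e\<in>E. cross E e U}"
proof -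
  let ?P = "\<lambda>k. \<exists>W F. U \<subseteq> W \<and> W \<subseteq> UNIV \<and> F \<subseteq> E \<and> (\<forall>e\<in>F. e \<subseteq> W)
        \<and> connected_on W F \<and> card F = k"
  let ?C = "{e\<in>E. cross E e U}"
  have sd: "steiner_dist UNIV E U = (LEAST k. ?P k)" by (simp add: steiner_dist_def)
  have "?P (card E)"
    apply (rule exI[of _ UNIV], rule exI[of _ E])
    using tree_conn[OF t] by simp
  then have "?P (LEAST k. ?P k)" by (rule LeastI)
  then obtain W0 F0 where w0: "U \<subseteq> W0" "F0 \<subseteq> E" "\<forall>e\<in>F0. e \<subseteq> W0" "connected_on W0 F0"
     "card F0 = steiner_dist UNIV E U" using sd by auto
  have le: "steiner_dist UNIV E U \<le> card F" if "U \<subseteq> W" "F \<subseteq> E" "\<forall>e\<in>F. e \<subseteq> W" "connected_on W F" for W F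
    unfolding sd by (rule Least_le) (use that in blast)
  have sub: "?C \<subseteq> F" if "U \<subseteq> W" "F \<subseteq> E" "connected_on W F" for W F
  proof
    fix e assume "e \<in> ?C"
    then have e: "e \<in> E" "cross E e U" by auto
    obtain y where b: "bnd E e (Se E e) (xe e) y" using bnd_Se[OF t e(1)] by blast
    from e(2) obtain u1 u2 where u: "u1 \<in> U" "u1 \<in> Se E e" "u2 \<in> U" "u2 \<notin> Se E e"
      unfolding cross_def by auto
    have "(u1,u2) \<in> (adj_rel F)\<^sup>*" using that u unfolding connected_on_def by auto
    show "e \<in> F"
    proof (rule ccontr)
      assume "e \<notin> F"
      then have "F \<subseteq> E - {e}" using that by auto
      from bnd_path_stay[OF b this \<open>(u1,u2) \<in> _\<close> u(2)] u(4) show False by simp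
    qed
  qed
  have sub2: "F0 \<subseteq> ?C"
  proof
    fix e assume eF: "e \<in> F0"
    then have eE: "e \<in> E" using w0 by auto
    show "e \<in> ?C"
    proof (rule ccontr)
      assume "e \<notin> ?C"
      then have nc: "U \<subseteq> Se E e \<or> U \<subseteq> - Se E e" using eE unfolding cross_def by auto
      obtain y where b1: "bnd E e (Se E e) (xe e) y" and b2: "bnd E e (- Se E e) y (xe e)"
        using bnd_Se[OF t eE] by blast
      obtain W F where wf: "U \<subseteq> W" "F \<subseteq> E" "\<forall>f\<in>F. f \<subseteq> W" "connected_on W F" "card F < card F0"
        using nc cut_witness[OF b1 eF w0(2) w0(1) _ w0(3) w0(4)] cut_witness[OF b2 eF w0(2) w0(1) _ w0(3) w0(4)]
        by auto
      from le[OF wf(1-4)] wf(5) w0(5) show False by simp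
    qed
  qed
  have "card ?C \<le> card F0" using sub[OF w0(1,2,4)] by (simp add: card_mono)
  moreover have "card F0 \<le> card ?C" using sub2 by (simp add: card_mono)
  ultimately show ?thesis using w0(5) by simp
qed




lemma sum4_prod:
  fixes f1 f2 f3 f4 :: "'a \<Rightarrow> real"
  shows "(\<Sum>i1\<in>A. \<Sum>i2\<in>A. \<Sum>i3\<in>A. \<Sum>i4\<in>A. f1 i1 * f2 i2 * f3 i3 * f4 i4)
       = sum f1 A * sum f2 A * sum f3 A * sum f4 A"
  by (simp only: sum_distrib_left[symmetric] sum_distrib_right[symmetric])

lemma sum4_swap:
  fixes h :: "'e \<Rightarrow> 'a \<Rightarrow> 'a \<Rightarrow> 'a \<Rightarrow> 'a \<Rightarrow> real"
  shows "(\<Sum>i1\<in>A. \<Sum>i2\<in>A. \<Sum>i3\<in>A. \<Sum>i4\<in>A. \<Sum>e\<in>E. h e i1 i2 i3 i4)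
       = (\<Sum>e\<in>E. \<Sum>i1\<in>A. \<Sum>i2\<in>A. \<Sum>i3\<in>A. \<Sum>i4\<in>A. h e i1 i2 i3 i4)"
proof -
  have s4: "\<And>i1 i2 i3. (\<Sum>i4\<in>A. \<Sum>e\<in>E. h e i1 i2 i3 i4) = (\<Sum>e\<in>E. \<Sum>i4\<in>A. h e i1 i2 i3 i4)"
    by (rule sum.swap)
  have s3: "\<And>i1 i2. (\<Sum>i3\<in>A. \<Sum>e\<in>E. \<Sum>i4\<in>A. h e i1 i2 i3 i4) = (\<Sum>e\<in>E. \<Sum>i3\<in>A. \<Sum>i4\<in>A. h e i1 i2 i3 i4)"
    by (rule sum.swap)
  have s2: "\<And>i1. (\<Sum>i2\<in>A. \<Sum>e\<in>E. \<Sum>i3\<in>A. \<Sum>i4\<in>A. h e i1 i2 i3 i4) = (\<Sum>e\<in>E. \<Sum>i2\<in>A. \<Sum>i3\<in>A. \<Sum>i4\<in>A. h e i1 i2 i3 i4)"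
    by (rule sum.swap)
  have s1: "(\<Sum>i1\<in>A. \<Sum>e\<in>E. \<Sum>i2\<in>A. \<Sum>i3\<in>A. \<Sum>i4\<in>A. h e i1 i2 i3 i4) = (\<Sum>e\<in>E. \<Sum>i1\<in>A. \<Sum>i2\<in>A. \<Sum>i3\<in>A. \<Sum>i4\<in>A. h e i1 i2 i3 i4)"
    by (rule sum.swap)
  show ?thesis by (simp only: s4 s3 s2 s1)
qed

lemma Av_nth:
  fixes v :: "real^'n::finite"
  shows "(A_mat *v v) $ i = 2 / real CARD('n) * sum (($) v) UNIV - v $ i"
proof -
  have "(A_mat *v v) $ i = (\<Sum>j\<in>UNIV. (2 / real CARD('n) - (if i = j then 1 else 0)) * v $ j)"
    by (simp add: matrix_vector_mult_def A_mat_def)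
  also have "\<dots> = (\<Sum>j\<in>UNIV. 2 / real CARD('n) * v $ j - (if i = j then v $ j else 0))"
    by (rule sum.cong) (auto simp: left_diff_distrib)
  also have "\<dots> = 2 / real CARD('n) * sum (($) v) UNIV - v $ i"
    by (simp add: sum_subtractf sum_distrib_left)
  finally show ?thesis .
qed

lemma Av_sum:
  fixes v :: "real^'n::finite"
  shows "sum (($) (A_mat *v v)) S = 2 / real CARD('n) * real (card S) * sum (($) v) UNIV - sum (($) v) S"
  by (simp add: Av_nth sum_subtractf)

lemma Av_sum_UNIV:
  fixes v :: "real^'n::finite"
  shows "sum (($) (A_mat *v v)) UNIV = sum (($) v) UNIV"
  using Av_sum[of v UNIV] by simp

lemma poly_id:
  fixes s a t :: real
  shows "(s * s * s * s - a * a * a * (2 * t * s - a) - (s-a) * (s-a) * (s-a) * (s - (2 * t * s - a)))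
       + (s * s * s * s - a * (2 * t * s - a) * (2 * t * s - a) * (2 * t * s - a) - (s-a) * (s - (2 * t * s - a)) * (s - (2 * t * s - a)) * (s - (2 * t * s - a)))
       = 4  *  (a - t * s)^4 + 2  *  s^4  *  (1 - t^4 - (1-t)^4)"
  by algebra

lemma h_nonneg:
  fixes t :: real assumes "0 \<le> t" "t \<le> 1"
  shows "0 \<le> 1 - t^4 - (1-t)^4"
proof -
  have "t^3 \<le> 1" using assms by (simp add: power_le_one)
  then have a: "t^4 \<le> t" using assms mult_left_mono[of "t^3" 1 t] by (simp add: power_Suc[symmetric] eval_nat_numeral)
  have "(1-t)^3 \<le> 1" using assms by (simp add: power_le_one)
  then have b: "(1-t)^4 \<le> 1 - t" using assms mult_left_mono[of "(1-t)^3" 1 "1-t"] by (simp add: eval_nat_numeral)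
  show ?thesis using a b by simp
qed

lemma h_pos:
  fixes t :: real assumes "0 < t" "t < 1"
  shows "0 < 1 - t^4 - (1-t)^4"
proof -
  have "t^3 < 1" using assms by (simp add: power_less_one_iff)
  then have a: "t^4 < t" using assms mult_strict_left_mono[of "t^3" 1 t] by (simp add: eval_nat_numeral)
  have "(1-t)^3 < 1" using assms by (simp add: power_less_one_iff)
  then have b: "(1-t)^4 < 1 - t" using assms mult_strict_left_mono[of "(1-t)^3" 1 "1-t"] by (simp add: eval_nat_numeral)
  show ?thesis using a b by simp
qed




lemma cross_ind:
  "of_bool ({i1,i2,i3,i4} \<inter> S \<noteq> {} \<and> {i1,i2,i3,i4} - S \<noteq> {}) =
   (1::real) - of_bool (i1\<in>S) * of_bool (i2\<in>S) * of_bool (i3\<in>S) * of_bool (i4\<in>S)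
   - of_bool (i1\<notin>S) * of_bool (i2\<notin>S) * of_bool (i3\<notin>S) * of_bool (i4\<notin>S)"
  by (cases "i1\<in>S"; cases "i2\<in>S"; cases "i3\<in>S"; cases "i4\<in>S") auto

lemma sum_ind:
  fixes f :: "'n::finite \<Rightarrow> real"
  shows "(\<Sum>i\<in>UNIV. of_bool (i\<in>S) * f i) = sum f S"
proof -
  have "(\<Sum>i\<in>UNIV. of_bool (i\<in>S) * f i) = (\<Sum>i\<in>UNIV. if i \<in> S then f i else 0)"
    by (rule sum.cong) auto
  also have "\<dots> = sum f {i\<in>UNIV. i \<in> S}" by (rule sum.inter_filter[symmetric]) simp
  finally show ?thesis by simp
qed

lemma sum_ind_compl:
  fixes f :: "'n::finite \<Rightarrow> real"
  shows "(\<Sum>i\<in>UNIV. of_bool (i\<notin>S) * f i) = sum f (- S)"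
  using sum_ind[of "-S" f] by simp

lemma per_e:
  fixes f1 f2 f3 f4 :: "'n::finite \<Rightarrow> real"
  shows "(\<Sum>i1\<in>UNIV. \<Sum>i2\<in>UNIV. \<Sum>i3\<in>UNIV. \<Sum>i4\<in>UNIV.
     ((1::real) - of_bool (i1\<in>S) * of_bool (i2\<in>S) * of_bool (i3\<in>S) * of_bool (i4\<in>S)
   - of_bool (i1\<notin>S) * of_bool (i2\<notin>S) * of_bool (i3\<notin>S) * of_bool (i4\<notin>S)) * f1 i1 * f2 i2 * f3 i3 * f4 i4)
   = sum f1 UNIV * sum f2 UNIV * sum f3 UNIV * sum f4 UNIV
     - sum f1 S * sum f2 S * sum f3 S * sum f4 S
     - sum f1 (-S) * sum f2 (-S) * sum f3 (-S) * sum f4 (-S)"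
proof -
  let ?g = "\<lambda>f i. of_bool (i\<in>S) * (f i::real)"
  let ?h = "\<lambda>f i. of_bool (i\<notin>S) * (f i::real)"
  have pw: "\<And>i1 i2 i3 i4. ((1::real) - of_bool (i1\<in>S) * of_bool (i2\<in>S) * of_bool (i3\<in>S) * of_bool (i4\<in>S)
   - of_bool (i1\<notin>S) * of_bool (i2\<notin>S) * of_bool (i3\<notin>S) * of_bool (i4\<notin>S)) * f1 i1 * f2 i2 * f3 i3 * f4 i4
   = f1 i1 * f2 i2 * f3 i3 * f4 i4 - ?g f1 i1 * ?g f2 i2 * ?g f3 i3 * ?g f4 i4
     - ?h f1 i1 * ?h f2 i2 * ?h f3 i3 * ?h f4 i4"
    by (simp add: algebra_simps)
  show ?thesis
    apply (simp only: pw sum_subtractf sum4_prod)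
    apply (simp only: sum_ind sum_ind_compl)
    done
qed

lemma card_sum_bool:
  fixes E :: "'a set set"
  assumes "finite E"
  shows "real (card {e\<in>E. P e}) = (\<Sum>e\<in>E. of_bool (P e))"
proof -
  have "(\<Sum>e\<in>E. of_bool (P e)) = (\<Sum>e\<in>E. if P e then (1::real) else 0)"
    by (rule sum.cong) auto
  also have "\<dots> = (\<Sum>e\<in>{e\<in>E. P e}. 1)" by (rule sum.inter_filter[symmetric]) (rule assms)
  finally show ?thesis by simp
qed

lemma form_dec:
  fixes E :: "('n::finite) set set"
  assumes t: "is_tree UNIV E"
  shows "steiner_form4 E x1 x2 x3 x4 = (\<Sum>e\<in>E.
      sum (($) x1) UNIV * sum (($) x2) UNIV * sum (($) x3) UNIV * sum (($) x4) UNIV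
     - sum (($) x1) (Se E e) * sum (($) x2) (Se E e) * sum (($) x3) (Se E e) * sum (($) x4) (Se E e)
     - sum (($) x1) (- Se E e) * sum (($) x2) (- Se E e) * sum (($) x3) (- Se E e) * sum (($) x4) (- Se E e))"
proof -
  let ?c = "\<lambda>e i1 i2 i3 i4. ((1::real) - of_bool (i1\<in>Se E e) * of_bool (i2\<in>Se E e) * of_bool (i3\<in>Se E e) * of_bool (i4\<in>Se E e)
   - of_bool (i1\<notin>Se E e) * of_bool (i2\<notin>Se E e) * of_bool (i3\<notin>Se E e) * of_bool (i4\<notin>Se E e))"
  have sd: "\<And>i1 i2 i3 i4. real (steiner_dist UNIV E {i1,i2,i3,i4}) = (\<Sum>e\<in>E. ?c e i1 i2 i3 i4)"
    by (simp only: steiner_eq[OF t] card_sum_bool[OF finite_any] cross_def cross_ind)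
  have "steiner_form4 E x1 x2 x3 x4 = (\<Sum>i1\<in>UNIV. \<Sum>i2\<in>UNIV. \<Sum>i3\<in>UNIV. \<Sum>i4\<in>UNIV. \<Sum>e\<in>E.
        ?c e i1 i2 i3 i4 * x1 $ i1 * x2 $ i2 * x3 $ i3 * x4 $ i4)"
    unfolding steiner_form4_def sd by (simp only: sum_distrib_right)
  also have "\<dots> = (\<Sum>e\<in>E. \<Sum>i1\<in>UNIV. \<Sum>i2\<in>UNIV. \<Sum>i3\<in>UNIV. \<Sum>i4\<in>UNIV.
        ?c e i1 i2 i3 i4 * x1 $ i1 * x2 $ i2 * x3 $ i3 * x4 $ i4)"
    by (rule sum4_swap)
  also have "\<dots> = (\<Sum>e\<in>E.
      sum (($) x1) UNIV * sum (($) x2) UNIV * sum (($) x3) UNIV * sum (($) x4) UNIV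
     - sum (($) x1) (Se E e) * sum (($) x2) (Se E e) * sum (($) x3) (Se E e) * sum (($) x4) (Se E e)
     - sum (($) x1) (- Se E e) * sum (($) x2) (- Se E e) * sum (($) x3) (- Se E e) * sum (($) x4) (- Se E e))"
    by (rule sum.cong[OF refl]) (rule per_e)
  finally show ?thesis .
qed




lemma adj_sym: "(a,b) \<in> (adj_rel F)\<^sup>* \<Longrightarrow> (b,a) \<in> (adj_rel F)\<^sup>*"
proof (induction rule: rtrancl_induct)
  case base then show ?case by simp
next
  case (step b c)
  then have "(c,b) \<in> adj_rel F" by (simp add: insert_commute)
  then show ?case using step.IH by (rule converse_rtrancl_into_rtrancl)
qed

lemma reach_split:
  assumes "(x,z) \<in> (adj_rel E)\<^sup>*" "e = {x,y}"
  shows "z \<in> side E e x \<union> side E e y"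
  using assms(1)
proof (induction rule: rtrancl_induct)
  case base then show ?case by (simp add: side_def)
next
  case (step b c)
  show ?case
  proof (cases "{b,c} = e")
    case True
    then have "c = x \<or> c = y" using assms(2) by (auto simp: doubleton_eq_iff)
    then show ?thesis by (auto simp: side_def)
  next
    case False
    have bc: "{b,c} \<in> E" using step by simp
    from step.IH show ?thesis using side_closed[OF _ bc False] by blast
  qed
qed

lemma side_partition:
  assumes t: "is_tree UNIV E" and e: "e = {x,y}" "e \<in> E" and xy: "x \<noteq> y"
  shows "side E e y = - side E e x"
proof
  show "side E e y \<subseteq> - side E e x"
  proof
    fix z assume zy: "z \<in> side E e y"
    show "z \<in> - side E e x"
    proof
      assume "z \<in> side E e x"
      then have "(x,z) \<in> (adj_rel (E - {e}))\<^sup>*" by (simp add: side_def)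
      moreover have "(z,y) \<in> (adj_rel (E - {e}))\<^sup>*" using zy adj_sym by (simp add: side_def)
      ultimately have "y \<in> side E e x" by (simp add: side_def)
      with acyclic_side[OF tree_nc[OF t] e xy] show False by simp
    qed
  qed
  show "- side E e x \<subseteq> side E e y"
  proof
    fix z assume "z \<in> - side E e x"
    moreover have "(x,z) \<in> (adj_rel E)\<^sup>*" using tree_conn[OF t] unfolding connected_on_def by simp
    ultimately show "z \<in> side E e y" using reach_split[OF _ e(1)] by blast
  qed
qed

lemma sum_compl:
  fixes f :: "'n::finite \<Rightarrow> real"
  shows "sum f (- S) = sum f UNIV - sum f S"
  by (simp add: Compl_eq_Diff_UNIV sum_diff)

lemma sum_side_zero:
  fixes E :: "('n::finite) set set" and v :: "real^'n"
  assumes t: "is_tree UNIV E" and Z: "\<forall>e\<in>E. sum (($) v) (Se E e) = 0"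
    and s: "sum (($) v) UNIV = 0" and e: "{x,y} \<in> E" and xy: "x \<noteq> y"
  shows "sum (($) v) (side E {x,y} x) = 0"
proof -
  let ?e = "{x,y}"
  have "xe ?e \<in> ?e" unfolding xe_def by (rule someI[of _ x]) simp
  then consider "xe ?e = x" | "xe ?e = y" by auto
  then show ?thesis
  proof cases
    case 1
    have "sum (($) v) (Se E ?e) = 0" using Z e by blast
    then show ?thesis using 1 by (simp add: Se_def)
  next
    case 2
    have "side E ?e x = - side E ?e y" using side_partition[OF t _ e, of y x] xy
      by (simp add: insert_commute)
    then have "side E ?e x = - Se E ?e" using 2 by (simp add: Se_def)
    then show ?thesis using Z e s by (simp add: sum_compl)
  qed
qed

lemma N1:
  assumes "(x,z) \<in> (adj_rel (E - {e}))\<^sup>*"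
  shows "z = x \<or> (\<exists>x'. {x,x'} \<in> E \<and> {x,x'} \<noteq> e \<and> z \<in> side E {x,x'} x')"
  using assms
proof (induction rule: rtrancl_induct)
  case base then show ?case by simp
next
  case (step b c)
  have bc: "{b,c} \<in> E" "{b,c} \<noteq> e" using step by auto
  show ?case
  proof (cases "c = x")
    case True then show ?thesis by simp
  next
    case cx: False
    from step.IH show ?thesis
    proof
      assume "b = x"
      then have "{x,c} \<in> E \<and> {x,c} \<noteq> e \<and> c \<in> side E {x,c} c" using bc by (simp add: side_def)
      then show ?thesis by blast
    next
      assume "\<exists>x'. {x,x'} \<in> E \<and> {x,x'} \<noteq> e \<and> b \<in> side E {x,x'} x'"
      then obtain x' where x': "{x,x'} \<in> E" "{x,x'} \<noteq> e" "b \<in> side E {x,x'} x'" by blast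
      have "c \<in> side E {x,x'} x'"
      proof (cases "{b,c} = {x,x'}")
        case True
        then have "c = x'" using cx by (auto simp: doubleton_eq_iff)
        then show ?thesis by (simp add: side_def)
      next
        case False
        show ?thesis using side_closed[OF x'(3) bc(1) False] .
      qed
      then show ?thesis using x' by blast
    qed
  qed
qed

lemma N2:
  assumes t: "is_tree UNIV E" and e: "e = {x,y}" "e \<in> E" and xy: "x \<noteq> y"
    and f: "{x,x'} \<in> E" "{x,x'} \<noteq> e"
  shows "side E {x,x'} x' \<subseteq> side E e x - {x}"
proof -
  let ?f = "{x,x'}"
  have xx': "x' \<noteq> x" using edge_two[OF t f(1)] by simp
  have f': "?f = {x',x}" by (simp add: insert_commute)
  have xnot: "x \<notin> side E ?f x'" using acyclic_side[OF tree_nc[OF t] f' f(1) xx'] .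
  have ynot: "y \<notin> side E e x" using acyclic_side[OF tree_nc[OF t] e xy] .
  have "c \<in> side E e x" if "c \<in> side E ?f x'" for c
  proof -
    have "(x',c) \<in> (adj_rel (E - {?f}))\<^sup>*" using that by (simp add: side_def)
    then show ?thesis
    proof (induction rule: rtrancl_induct)
      case base
      have "(x,x') \<in> adj_rel (E - {e})" using f by simp
      then have "(x,x') \<in> (adj_rel (E - {e}))\<^sup>*" by (rule r_into_rtrancl)
      then show ?case unfolding side_def by blast
    next
      case (step b c)
      have bc: "{b,c} \<in> E" using step by simp
      show ?case
      proof (cases "{b,c} = e")
        case False then show ?thesis using side_closed[OF step.IH bc] by blast
      next
        case True
        then have "b = x \<or> b = y" using e by (auto simp: doubleton_eq_iff)
        moreover have "b \<noteq> y" using step.IH ynot by auto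
        moreover have "b \<noteq> x" using step(1) xnot by (auto simp: side_def)
        ultimately show ?thesis by simp
      qed
    qed
  qed
  then show ?thesis using xnot by auto
qed

lemma vertex_zero:
  fixes E :: "('n::finite) set set" and v :: "real^'n"
  assumes t: "is_tree UNIV E"
    and Z: "\<And>x y. {x,y} \<in> E \<Longrightarrow> x \<noteq> y \<Longrightarrow> sum (($) v) (side E {x,y} x) = 0"
  shows "\<forall>x y. {x,y} \<in> E \<longrightarrow> x \<noteq> y \<longrightarrow> card (side E {x,y} x) = k \<longrightarrow> (\<forall>z\<in>side E {x,y} x. v $ z = 0)"
proof (induction k rule: less_induct)
  case (less k)
  show ?case
  proof (intro allI impI)
    fix x y assume e: "{x,y} \<in> E" and xy: "x \<noteq> y" and k: "card (side E {x,y} x) = k"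
    let ?D = "side E {x,y} x"
    have rest: "v $ z = 0" if z: "z \<in> ?D - {x}" for z
    proof -
      have "(x,z) \<in> (adj_rel (E - {{x,y}}))\<^sup>*" using z by (simp add: side_def)
      from N1[OF this] z obtain x' where x': "{x,x'} \<in> E" "{x,x'} \<noteq> {x,y}" "z \<in> side E {x,x'} x'" by auto
      have sub: "side E {x,x'} x' \<subseteq> ?D - {x}" using N2[OF t refl e xy x'(1,2)] .
      have "x \<in> ?D" by (simp add: side_def)
      then have "card (side E {x,x'} x') < card ?D" using sub
        by (intro psubset_card_mono) auto
      moreover have "{x',x} \<in> E" using x'(1) by (simp add: insert_commute)
      moreover have "x' \<noteq> x" using edge_two[OF t x'(1)] by simp
      ultimately show ?thesis using less[of "card (side E {x,x'} x')"] k x'(3)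
        by (simp add: insert_commute)
    qed
    have xD: "x \<in> ?D" by (simp add: side_def)
    have "sum (($) v) ?D = v $ x + sum (($) v) (?D - {x})"
      using xD by (simp add: sum.remove)
    also have "sum (($) v) (?D - {x}) = 0" using rest by simp
    finally have "v $ x = 0" using Z[OF e xy] by simp
    then show "\<forall>z\<in>?D. v $ z = 0" using rest by auto
  qed
qed




lemma edge_val:
  fixes v :: "real^'n::finite"
  shows "(sum (($) v) UNIV * sum (($) v) UNIV * sum (($) v) UNIV * sum (($) (A_mat *v v)) UNIV
     - sum (($) v) S * sum (($) v) S * sum (($) v) S * sum (($) (A_mat *v v)) S
     - sum (($) v) (-S) * sum (($) v) (-S) * sum (($) v) (-S) * sum (($) (A_mat *v v)) (-S))
   + (sum (($) v) UNIV * sum (($) (A_mat *v v)) UNIV * sum (($) (A_mat *v v)) UNIV * sum (($) (A_mat *v v)) UNIV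
     - sum (($) v) S * sum (($) (A_mat *v v)) S * sum (($) (A_mat *v v)) S * sum (($) (A_mat *v v)) S
     - sum (($) v) (-S) * sum (($) (A_mat *v v)) (-S) * sum (($) (A_mat *v v)) (-S) * sum (($) (A_mat *v v)) (-S))
   = 4 * (sum (($) v) S - real (card S) / real CARD('n) * sum (($) v) UNIV)^4
     + 2 * (sum (($) v) UNIV)^4 * (1 - (real (card S) / real CARD('n))^4 - (1 - real (card S) / real CARD('n))^4)"
proof -
  let ?s = "sum (($) v) UNIV" and ?a = "sum (($) v) S" and ?t = "real (card S) / real CARD('n)"
  have sw: "sum (($) (A_mat *v v)) UNIV = ?s" by (rule Av_sum_UNIV)
  have e1: "sum (($) (A_mat *v v)) S = 2 * ?t * ?s - ?a" by (simp add: Av_sum)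
  have e2: "sum (($) v) (-S) = ?s - ?a" by (rule sum_compl)
  have e3: "sum (($) (A_mat *v v)) (-S) = ?s - (2 * ?t * ?s - ?a)" by (simp only: sum_compl sw e1)
  show ?thesis unfolding sw e1 e2 e3 by (rule poly_id)
qed

theorem mainTheorem14:
  fixes E :: "('n::finite) set set"
  assumes "CARD('n) \<ge> 3"
    and "is_tree UNIV E"
  shows "\<forall>v :: real^'n. v \<noteq> 0 \<longrightarrow>
           steiner_form4 E v v v (A_mat *v v)
         + steiner_form4 E v (A_mat *v v) (A_mat *v v) (A_mat *v v) > 0"
proof (intro allI impI)
  note t = assms(2)
  fix v :: "real^'n" assume v0: "v \<noteq> 0"
  let ?w = "A_mat *v v"
  let ?s = "sum (($) v) UNIV"
  let ?a = "\<lambda>e. sum (($) v) (Se E e)"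
  let ?t = "\<lambda>e. real (card (Se E e)) / real CARD('n)"
  let ?G = "\<lambda>e. 4 * (?a e - ?t e * ?s)^4 + 2 * ?s^4 * (1 - (?t e)^4 - (1 - ?t e)^4)"
  have tot: "steiner_form4 E v v v ?w + steiner_form4 E v ?w ?w ?w = (\<Sum>e\<in>E. ?G e)"
    unfolding form_dec[OF t] sum.distrib[symmetric] edge_val ..
  have t01: "0 \<le> ?t e \<and> ?t e \<le> 1" for e
  proof -
    have "card (Se E e) \<le> CARD('n)" by (rule card_mono) auto
    then show ?thesis by (simp add: divide_le_eq_1)
  qed
  have Gnn: "0 \<le> ?G e" for e
  proof -
    have "0 \<le> (?a e - ?t e * ?s)^4" by (simp add: zero_le_even_power)
    moreover have "0 \<le> ?s^4" by (simp add: zero_le_even_power)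
    moreover have "0 \<le> 1 - (?t e)^4 - (1 - ?t e)^4" using h_nonneg t01[of e] by blast
    ultimately show ?thesis by simp
  qed
  show "0 < steiner_form4 E v v v ?w + steiner_form4 E v ?w ?w ?w"
  proof (rule ccontr)
    assume "\<not> ?thesis"
    moreover have "0 \<le> (\<Sum>e\<in>E. ?G e)" by (rule sum_nonneg) (rule Gnn)
    ultimately have "(\<Sum>e\<in>E. ?G e) = 0" using tot by simp
    then have G0: "\<forall>e\<in>E. ?G e = 0" using sum_nonneg_eq_0_iff[OF finite_any[of E], of ?G] Gnn by blast
    obtain u where u: "v $ u \<noteq> 0" using v0 by (auto simp: vec_eq_iff)
    obtain u' where u': "u' \<noteq> u"
    proof -
      have "UNIV \<noteq> {u}"
      proof
        assume "UNIV = {u}"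
        then have "card (UNIV::'n set) = card {u}" by (rule arg_cong)
        then have "CARD('n) = 1" by simp
        with assms(1) show False by simp
      qed
      then show ?thesis using that by blast
    qed
    have "(u,u') \<in> (adj_rel E)\<^sup>*" using tree_conn[OF t] unfolding connected_on_def by simp
    then have "(u,u') \<in> (adj_rel E)\<^sup>+" using u' by (simp add: rtrancl_eq_or_trancl)
    then obtain c where "(u,c) \<in> adj_rel E" by (meson tranclD)
    then have uc: "{u,c} \<in> E" by simp
    have ucne: "u \<noteq> c" using edge_two[OF t uc] .
    have s0: "?s = 0"
    proof (rule ccontr)
      assume sn: "?s \<noteq> 0"
      let ?e = "{u,c}"
      obtain y where b: "bnd E ?e (Se E ?e) (xe ?e) y" using bnd_Se[OF t uc] by blast
      have "Se E ?e \<noteq> {}" using bnd_x[OF b] by blast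
      then have c1: "0 < card (Se E ?e)" by (simp add: card_gt_0_iff)
      have "Se E ?e \<subset> UNIV" using bnd_y[OF b] by blast
      then have c2: "card (Se E ?e) < CARD('n)" by (rule psubset_card_mono[rotated]) simp
      have "0 < ?t ?e" using c1 by simp
      moreover have "?t ?e < 1" using c2 by simp
      ultimately have hp: "0 < 1 - (?t ?e)^4 - (1 - ?t ?e)^4" by (rule h_pos)
      have "0 < ?s^4" using sn by simp
      then have B: "0 < 2 * ?s^4 * (1 - (?t ?e)^4 - (1 - ?t ?e)^4)" using hp by simp
      have A: "0 \<le> 4 * (?a ?e - ?t ?e * ?s)^4" by (simp add: zero_le_even_power)
      have "0 < ?G ?e" using A B by (rule add_nonneg_pos)
      with G0 uc show False by simp
    qed
    have Z0: "\<forall>e\<in>E. ?a e = 0"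
    proof
      fix e assume "e \<in> E"
      then have "?G e = 0" using G0 by blast
      then have "(?a e)^4 = 0" using s0 by simp
      then show "?a e = 0" by simp
    qed
    have Z: "\<And>x y. {x,y} \<in> E \<Longrightarrow> x \<noteq> y \<Longrightarrow> sum (($) v) (side E {x,y} x) = 0"
      using sum_side_zero[OF t Z0 s0] by blast
    have "u \<in> side E {u,c} u" by (simp add: side_def)
    then have "v $ u = 0" using vertex_zero[OF t Z] uc ucne by blast
    with u show False by simp
  qed
qed


end
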